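(* Let $K\ge2$ be an integer and let $p$ be the ordered-partition distribution of any one of the following priors with $K$ components: (i) the Dirichlet multinomial process with parameter $\alpha>0$; (ii) the Pitman--Yor multinomial process with parameters $\sigma\in(0,1)$, $\alpha>-\sigma$; (iii) the normalized generalized gamma multinomial process with parameters $\sigma\in(0,1)$, $\beta>0$. Then for every fixed $k$ with $1\le k<K$, $$\limsup_{n\to\infty} c_n(k)<\infty .$$
   Context: For $n\ge 1$ and $k\in\{1,\ldots,n\}$, let $\mathcal{A}_k(n)$ be the set of ordered partitions $A=(A_1,\ldots,A_k)$ of $\{1,\ldots,n\}$ into $k$ nonempty disjoint sets, and write $n_i=|A_i|$. For $A\in\mathcal{A}_k(n)$ let $R_A=\bigcup_{i:|A_i|\ge 2}A_i$. For $j\in R_A$ with $j\in A_\ell$, let $B(A,j)\in\mathcal{A}_{k+1}(n)$ be the ordered partition with $B_i=A_i$ for $i\neq \ell$, $i\le k$, $B_\ell=A_\ell\setminus\{j\}$ and $B_{k+1}=\{j\}$. Let $\mathcal{Z}_A=\{B(A,j):j\in R_A\}$. For $n>k\ge1$ define $$c_n(k)=\frac1n\max_{A\in\mathcal{A}_k(n)}\max_{B\in\mathcal{Z}_A}\frac{p(A)}{p(B)},$$ with the conventions $0/0=0$ and $y/0=\infty$ for $y>0$. Notation: $(x)_m=x(x+1)\cdots(x+m-1)$, $(x)_0=1$; generalized factorial coefficients $C(n,\ell;\sigma)=\frac1{\ell!}\sum_{j=0}^{\ell}(-1)^j\binom{\ell}{j}(-j\sigma)_n$. For $A\in\mathcal{A}_k(n)$,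 sums $\sum_{(\ell_1,\ldots,\ell_k)}$ run over integer vectors with $\ell_i\in\{1,\ldots,n_i\}$, and $|\ell^{(k)}|=\ell_1+\cdots+\ell_k$. The partition distributions (for $k\le K$; $p(A)=0$ if $k>K$) are: (i) Dirichlet multinomial: $p(A)=\binom{K}{k}\frac{1}{(\alpha)_n}\prod_{j=1}^k(\alpha/K)_{n_j}$. (ii) Pitman--Yor multinomial: $p(A)=\binom{K}{k}\frac{1}{(\alpha+1)_{n-1}}\sum_{(\ell_1,\ldots,\ell_k)}\frac{\Gamma(\alpha/\sigma+|\ell^{(k)}|)}{\sigma\Gamma(\alpha/\sigma+1)}\prod_{i=1}^k\frac{C(n_i,\ell_i;\sigma)}{K^{\ell_i}}$. (iii) NGG multinomial: $p(A)=\binom{K}{k}\sum_{(\ell_1,\ldots,\ell_k)}\frac{V_{n,|\ell^{(k)}|}}{K^{|\ell^{(k)}|}}\prod_{i=1}^k\frac{C(n_i,\ell_i;\sigma)}{\sigma^{\ell_i}}$, where $V_{n,m}=\frac{e^{\beta}\sigma^{m-1}}{\Gamma(n)}\sum_{i=0}^{n-1}\binom{n-1}{i}(-1)^i\beta^{i/\sigma}\Gamma\!\left(m-\tfrac{i}{\sigma};\beta\right)$ with $\Gamma(x;a)=\int_x^\infty s^{a-1}e^{-s}\,\mathrm{d}s$. *)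

theory Defs
  imports "HOL-Analysis.Analysis"
begin

text \<open>Ordered partitions of {1..n} into k nonempty blocks, encoded by the block-label
  function f: element i lies in block A_(f i); f vanishes outside {1..n}.\<close>
definition ord_parts :: "nat \<Rightarrow> nat \<Rightarrow> (nat \<Rightarrow> nat) set" where
  "ord_parts n k = {f. (\<forall>i\<in>{1..n}. f i \<in> {1..k}) \<and> (\<forall>i. i \<notin> {1..n} \<longrightarrow> f i = 0)
                       \<and> (\<forall>j\<in>{1..k}. \<exists>i\<in>{1..n}. f i = j)}"

definition bsize :: "nat \<Rightarrow> (nat \<Rightarrow> nat) \<Rightarrow> nat \<Rightarrow> nat" where
  "bsize n f j = card {i\<in>{1..n}. f i = j}"

definition split_parts :: "nat \<Rightarrow> nat \<Rightarrow> (nat \<Rightarrow> nat) \<Rightarrow> (nat \<Rightarrow> nat) set" where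
  "split_parts n k f = {f(j := k + 1) | j. j \<in> {1..n} \<and> bsize n f (f j) \<ge> 2}"

definition ratio :: "real \<Rightarrow> real \<Rightarrow> ereal" where
  "ratio x y = (if y = 0 then (if x = 0 then 0 else \<infinity>) else ereal (x / y))"

text \<open>c_n(k) for a partition distribution p n k f (set to 0 when n \<le> k; irrelevant for limsup)\<close>
definition c_seq :: "(nat \<Rightarrow> nat \<Rightarrow> (nat \<Rightarrow> nat) \<Rightarrow> real) \<Rightarrow> nat \<Rightarrow> nat \<Rightarrow> ereal" where
  "c_seq p n k = (if k < n then
      ereal (1 / real n) * Max {ratio (p n k A) (p n (k+1) B) | A B. A \<in> ord_parts n k \<and> B \<in> split_parts n k A}
    else 0)"

definition gfc :: "nat \<Rightarrow> nat \<Rightarrow> real \<Rightarrow> real" where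
  "gfc n l \<sigma> = (1 / fact l) * (\<Sum>j=0..l. (-1) ^ j * real (l choose j) * pochhammer (- (real j * \<sigma>)) n)"

definition lvecs :: "nat \<Rightarrow> nat \<Rightarrow> (nat \<Rightarrow> nat) \<Rightarrow> (nat \<Rightarrow> nat) set" where
  "lvecs n k f = PiE {1..k} (\<lambda>i. {1..bsize n f i})"

definition lsum :: "nat \<Rightarrow> (nat \<Rightarrow> nat) \<Rightarrow> nat" where
  "lsum k l = (\<Sum>i\<in>{1..k}. l i)"

definition upper_gamma :: "real \<Rightarrow> real \<Rightarrow> real" where
  "upper_gamma x a = integral {a..} (\<lambda>s. s powr (x - 1) * exp (- s))"

definition V_NGG :: "real \<Rightarrow> real \<Rightarrow> nat \<Rightarrow> nat \<Rightarrow> real" where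
  "V_NGG \<sigma> \<beta> n m = exp \<beta> * \<sigma> ^ (m - 1) / Gamma (real n) *
     (\<Sum>i=0..n-1. real (n - 1 choose i) * (-1) ^ i * \<beta> powr (real i / \<sigma>)
                    * upper_gamma (real m - real i / \<sigma>) \<beta>)"

definition p_DM :: "nat \<Rightarrow> real \<Rightarrow> nat \<Rightarrow> nat \<Rightarrow> (nat \<Rightarrow> nat) \<Rightarrow> real" where
  "p_DM K \<alpha> n k f = (if k \<le> K then
     real (K choose k) / pochhammer \<alpha> n * (\<Prod>j\<in>{1..k}. pochhammer (\<alpha> / real K) (bsize n f j))
   else 0)"

definition p_PY :: "nat \<Rightarrow> real \<Rightarrow> real \<Rightarrow> nat \<Rightarrow> nat \<Rightarrow> (nat \<Rightarrow> nat) \<Rightarrow> real" where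
  "p_PY K \<sigma> \<alpha> n k f = (if k \<le> K then
     real (K choose k) / pochhammer (\<alpha> + 1) (n - 1) *
     (\<Sum>l\<in>lvecs n k f. Gamma (\<alpha> / \<sigma> + real (lsum k l)) / (\<sigma> * Gamma (\<alpha> / \<sigma> + 1)) *
        (\<Prod>i\<in>{1..k}. gfc (bsize n f i) (l i) \<sigma> / real K ^ (l i)))
   else 0)"

definition p_NGG :: "nat \<Rightarrow> real \<Rightarrow> real \<Rightarrow> nat \<Rightarrow> nat \<Rightarrow> (nat \<Rightarrow> nat) \<Rightarrow> real" where
  "p_NGG K \<sigma> \<beta> n k f = (if k \<le> K then
     real (K choose k) *
     (\<Sum>l\<in>lvecs n k f. V_NGG \<sigma> \<beta> n (lsum k l) / real K ^ (lsum k l) *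
        (\<Prod>i\<in>{1..k}. gfc (bsize n f i) (l i) \<sigma> / \<sigma> ^ (l i)))
   else 0)"

end

theory Submission
  imports Defs
begin


lemma alt_shift_identity:
  fixes P :: "nat \<Rightarrow> real"
  shows "(\<Sum>j=0..Suc L. (-1)^j * real (Suc L choose j) * P j)
       = (\<Sum>j=0..L. (-1)^j * real (L choose j) * P j)
         + (\<Sum>i=0..L. (-1)^(Suc i) * real (L choose i) * P (Suc i))"
proof -
  have "(\<Sum>j=0..Suc L. (-1)^j * real (Suc L choose j) * P j)
      = P 0 + (\<Sum>i=0..L. (-1)^(Suc i) * real (Suc L choose Suc i) * P (Suc i))"
    by (subst sum.atLeast0_atMost_Suc_shift) simp
  also have "\<dots> = P 0 + (\<Sum>i=0..L. (-1)^(Suc i) * real (L choose Suc i) * P (Suc i)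
      + (-1)^(Suc i) * real (L choose i) * P (Suc i))"
    by (intro arg_cong2[where f="(+)"] refl sum.cong) (simp_all add: algebra_simps)
  also have "\<dots> = P 0 + (\<Sum>i=0..L. (-1)^(Suc i) * real (L choose Suc i) * P (Suc i))
      + (\<Sum>i=0..L. (-1)^(Suc i) * real (L choose i) * P (Suc i))"
    by (simp only: sum.distrib add.assoc)
  also have "P 0 + (\<Sum>i=0..L. (-1)^(Suc i) * real (L choose Suc i) * P (Suc i))
     = (\<Sum>j=0..Suc L. (-1)^j * real (L choose j) * P j)"
    by (simp only: sum.atLeast0_atMost_Suc_shift) simp
  also have "\<dots> = (\<Sum>j=0..L. (-1)^j * real (L choose j) * P j)"
    by simp
  finally show ?thesis .
qed

lemma alt_j_identity:
  fixes P :: "nat \<Rightarrow> real"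
  shows "(\<Sum>j=0..Suc L. (-1)^j * real (Suc L choose j) * real j * P j)
       = real (Suc L) * (\<Sum>i=0..L. (-1)^(Suc i) * real (L choose i) * P (Suc i))"
proof -
  have "(\<Sum>j=0..Suc L. (-1)^j * real (Suc L choose j) * real j * P j)
      = (\<Sum>i=0..L. (-1)^(Suc i) * real (Suc L choose Suc i) * real (Suc i) * P (Suc i))"
    by (subst sum.atLeast0_atMost_Suc_shift) simp
  also have "\<dots> = (\<Sum>i=0..L. real (Suc L) * ((-1)^(Suc i) * real (L choose i) * P (Suc i)))"
  proof (rule sum.cong[OF refl])
    fix i
    have "real (Suc L choose Suc i) * real (Suc i) = real (Suc L) * real (L choose i)"
      using Suc_times_binomial_eq[of L i] by (metis of_nat_mult mult.commute)
    then show "(-1)^(Suc i) * real (Suc L choose Suc i) * real (Suc i) * P (Suc i)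
       = real (Suc L) * ((-1)^(Suc i) * real (L choose i) * P (Suc i))"
      by (metis (no_types, lifting) mult.assoc mult.left_commute)
  qed
  also have "\<dots> = real (Suc L) * (\<Sum>i=0..L. (-1)^(Suc i) * real (L choose i) * P (Suc i))"
    by (simp add: sum_distrib_left)
  finally show ?thesis .
qed

definition U :: "nat \<Rightarrow> nat \<Rightarrow> real \<Rightarrow> real" where
  "U n l \<sigma> = (\<Sum>j=0..l. (-1) ^ j * real (l choose j) * pochhammer (- (real j * \<sigma>)) n)"

lemma gfc_U: "gfc n l \<sigma> = U n l \<sigma> / fact l"
  by (simp add: gfc_def U_def)

lemma U_rec:
  "U (Suc n) (Suc L) \<sigma> = \<sigma> * real (Suc L) * U n L \<sigma> + (real n - real (Suc L) * \<sigma>) * U n (Suc L) \<sigma>"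
proof -
  define P where "P j = pochhammer (- (real j * \<sigma>)) n" for j
  define Q where "Q = (\<Sum>i=0..L. (-1)^(Suc i) * real (L choose i) * P (Suc i))"
  have "U (Suc n) (Suc L) \<sigma> = (\<Sum>j=0..Suc L. (-1)^j * real (Suc L choose j) * (P j * (real n - real j * \<sigma>)))"
    unfolding U_def P_def by (simp add: pochhammer_Suc)
  also have "\<dots> = real n * (\<Sum>j=0..Suc L. (-1)^j * real (Suc L choose j) * P j)
        - \<sigma> * (\<Sum>j=0..Suc L. (-1)^j * real (Suc L choose j) * real j * P j)"
    by (simp add: sum_distrib_left sum_subtractf algebra_simps)
  also have "(\<Sum>j=0..Suc L. (-1)^j * real (Suc L choose j) * real j * P j) = real (Suc L) * Q"
    unfolding Q_def by (rule alt_j_identity)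
  also have "(\<Sum>j=0..Suc L. (-1)^j * real (Suc L choose j) * P j) = U n (Suc L) \<sigma>"
    unfolding U_def P_def ..
  also have "Q = U n (Suc L) \<sigma> - U n L \<sigma>"
    unfolding Q_def U_def using alt_shift_identity[of L P] unfolding P_def by simp
  finally show ?thesis by (simp add: algebra_simps)
qed

lemma gfc_rec:
  assumes "1 \<le> l"
  shows "gfc (Suc n) l \<sigma> = \<sigma> * gfc n (l - 1) \<sigma> + (real n - real l * \<sigma>) * gfc n l \<sigma>"
proof -
  obtain L where l: "l = Suc L" using assms by (cases l) auto
  have f: "fact (Suc L) = real (Suc L) * fact L" by simp
  have fp: "(fact L :: real) > 0" by simp
  show ?thesis unfolding l gfc_U U_rec f using fp
    by (simp add: field_simps del: of_nat_Suc)
qed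

lemma gfc_0_0: "gfc 0 0 \<sigma> = 1" by (simp add: gfc_def)

lemma gfc_0_l: "l \<ge> 1 \<Longrightarrow> gfc 0 l \<sigma> = 0"
  using choose_alternating_sum[of l, where 'a=real]
  by (simp add: gfc_def atLeast0AtMost)

lemma gfc_n_0: "n \<ge> 1 \<Longrightarrow> gfc n 0 \<sigma> = 0"
  by (simp add: gfc_def pochhammer_0_left)

lemma gfc_props:
  assumes "0 < \<sigma>" "\<sigma> < 1"
  shows "(\<forall>l. n < l \<longrightarrow> gfc n l \<sigma> = 0) \<and> (\<forall>l. 0 \<le> gfc n l \<sigma>)"
proof (induction n)
  case 0
  have "gfc 0 l \<sigma> = 0" if "0 < l" for l using gfc_0_l[of l \<sigma>] that by simp
  moreover have "0 \<le> gfc 0 l \<sigma>" for l using gfc_0_l[of l \<sigma>] gfc_0_0[of \<sigma>]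
    by (cases l) auto
  ultimately show ?case by blast
next
  case (Suc n)
  have z: "gfc (Suc n) l \<sigma> = 0" if "Suc n < l" for l
    using Suc that gfc_rec[of l n \<sigma>] by simp
  have nn: "0 \<le> gfc (Suc n) l \<sigma>" for l
  proof (cases "l = 0")
    case True then show ?thesis using gfc_n_0[of "Suc n"] by simp
  next
    case False
    show ?thesis
    proof (cases "l \<le> n")
      case True
      have "real l * \<sigma> \<le> real n" using True assms
        by (metis mult_le_cancel_left1 of_nat_0_le_iff of_nat_le_iff order.trans less_le_not_le
            linorder_not_less mult_le_cancel_left2)
      then show ?thesis using False Suc gfc_rec[of l n \<sigma>] assms by simp
    next
      case False2: False
      then show ?thesis using False Suc gfc_rec[of l n \<sigma>] assms by simp
    qed
  qed
  show ?case using z nn by blast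
qed



definition Ssum :: "(nat \<Rightarrow> real) \<Rightarrow> (nat \<Rightarrow> nat \<Rightarrow> real) \<Rightarrow> nat \<Rightarrow> (nat \<Rightarrow> nat) \<Rightarrow> real" where
  "Ssum G h k m = (\<Sum>l\<in>PiE {1..k} (\<lambda>i. {1..m i}). G (lsum k l) * (\<Prod>i\<in>{1..k}. h (m i) (l i)))"

lemma lsum_ge1:
  assumes "1 \<le> k" "l \<in> PiE {1..k} (\<lambda>i. {1..m i})"
  shows "1 \<le> lsum k l"
proof -
  have "l 1 \<ge> 1" using assms by (auto simp: PiE_iff)
  moreover have "l 1 \<le> lsum k l" unfolding lsum_def
    using assms(1) by (intro member_le_sum) auto
  ultimately show ?thesis by simp
qed

lemma Ssum_nonneg:
  assumes "1 \<le> k" "\<And>t. 1 \<le> t \<Longrightarrow> 0 \<le> G t" "\<And>M l. 0 \<le> h M l"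
  shows "0 \<le> Ssum G h k m"
  unfolding Ssum_def
  using assms lsum_ge1[OF assms(1)] by (intro sum_nonneg mult_nonneg_nonneg prod_nonneg) auto

lemma key_sum:
  fixes G :: "nat \<Rightarrow> real" and h :: "nat \<Rightarrow> nat \<Rightarrow> real" and m m' :: "nat \<Rightarrow> nat"
  assumes ell: "q \<in> {1..k}" and m2: "2 \<le> m q" and m'l: "m' q = m q - 1"
    and m'k: "m' (Suc k) = 1" and m'o: "\<And>i. i \<in> {1..k} \<Longrightarrow> i \<noteq> q \<Longrightarrow> m' i = m i"
    and mN: "m q \<le> N"
    and h_nn: "\<And>M l. 0 \<le> h M l" and h0: "\<And>M. 1 \<le> M \<Longrightarrow> h M 0 = 0"
    and hbig: "\<And>M l. M < l \<Longrightarrow> h M l = 0"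
    and hrec: "\<And>M l. 1 \<le> l \<Longrightarrow> Suc M \<le> N \<Longrightarrow> h (Suc M) l \<le> h 1 1 * h M (l - 1) + real N * h M l"
    and h11: "0 < h 1 1"
    and G_nn: "\<And>t. 1 \<le> t \<Longrightarrow> 0 \<le> G t" and D: "0 \<le> D"
    and G_mono: "\<And>t. 1 \<le> t \<Longrightarrow> G t \<le> D * G (Suc t)"
  shows "Ssum G h k m \<le> (1 + real N * D / h 1 1) * Ssum G h (Suc k) m'"
proof -
  define P where "P = PiE {1..k} (\<lambda>i. {1..m i})"
  define Q where "Q = PiE {1..Suc k} (\<lambda>i. {1..m' i})"
  define Oset where "Oset = {1..k} - {q}"
  define R where "R x = (\<Prod>i\<in>Oset. h (m i) (x i))" for x :: "nat \<Rightarrow> nat"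
  have k1: "1 \<le> k" using ell by auto
  have finO: "finite Oset" unfolding Oset_def by simp
  have R_nn: "0 \<le> R x" for x unfolding R_def by (intro prod_nonneg) (auto intro: h_nn)
  have R_cong: "R x = R y" if "\<And>i. i \<in> Oset \<Longrightarrow> x i = y i" for x y
    unfolding R_def using that by (intro prod.cong) auto
  have eqA: "(\<Prod>i\<in>{1..k}. h (m i) (l i)) = h (m q) (l q) * R l" for l
    unfolding R_def Oset_def using ell by (simp add: prod.remove)
  have eqB: "(\<Prod>i\<in>{1..Suc k}. h (m' i) (l' i)) = h 1 (l' (Suc k)) * (h (m q - 1) (l' q) * R l')" for l'
  proof -
    have "(\<Prod>i\<in>{1..Suc k}. h (m' i) (l' i)) = (\<Prod>i\<in>{1..k}. h (m' i) (l' i)) * h 1 (l' (Suc k))"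
      using m'k by (simp add: prod.cl_ivl_Suc)
    moreover have "(\<Prod>i\<in>{1..k}. h (m' i) (l' i)) = h (m' q) (l' q) * (\<Prod>i\<in>Oset. h (m' i) (l' i))"
      unfolding Oset_def using ell by (simp add: prod.remove)
    moreover have "(\<Prod>i\<in>Oset. h (m' i) (l' i)) = R l'"
      unfolding R_def Oset_def using m'o by (intro prod.cong) auto
    ultimately show ?thesis using m'l m'k by (simp add: mult.commute)
  qed
  have sumA: "lsum k l = l q + (\<Sum>i\<in>Oset. l i)" for l
    unfolding lsum_def Oset_def using ell by (simp add: sum.remove)
  have sumB: "lsum (Suc k) l = l (Suc k) + (l q + (\<Sum>i\<in>Oset. l i))" for l
  proof -
    have "lsum (Suc k) l = lsum k l + l (Suc k)" unfolding lsum_def by (simp add: sum.cl_ivl_Suc)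
    then show ?thesis using sumA[of l] by simp
  qed
  have sum_cong: "(\<Sum>i\<in>Oset. x i) = (\<Sum>i\<in>Oset. y i)" if "\<And>i. i \<in> Oset \<Longrightarrow> x i = y i" for x y :: "nat \<Rightarrow> nat"
    using that by (intro sum.cong) auto
  have finP: "finite P" unfolding P_def by (intro finite_PiE) auto
  have Pl: "1 \<le> l q \<and> l q \<le> m q" if "l \<in> P" for l using that ell unfolding P_def by (auto simp: PiE_iff)
  have SA: "Ssum G h k m = (\<Sum>l\<in>P. G (lsum k l) * (h (m q) (l q) * R l))"
    unfolding Ssum_def P_def using eqA by simp
  have SB: "Ssum G h (Suc k) m' = (\<Sum>l\<in>Q. G (lsum (Suc k) l) * (h 1 (l (Suc k)) * (h (m q - 1) (l q) * R l)))"
    unfolding Ssum_def Q_def using eqB by simp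
  define T1 where "T1 = (\<Sum>l\<in>P. G (lsum k l) * (h (m q - 1) (l q - 1) * R l))"
  define T2 where "T2 = (\<Sum>l\<in>P. G (Suc (lsum k l)) * (h (m q - 1) (l q) * R l))"
  have step: "Ssum G h k m \<le> h 1 1 * T1 + real N * D * T2"
  proof -
    have "Ssum G h k m \<le> (\<Sum>l\<in>P. h 1 1 * (G (lsum k l) * (h (m q - 1) (l q - 1) * R l))
            + real N * D * (G (Suc (lsum k l)) * (h (m q - 1) (l q) * R l)))"
      unfolding SA
    proof (rule sum_mono)
      fix l assume l: "l \<in> P"
      have t1: "1 \<le> lsum k l" using lsum_ge1[OF k1, of l m] l unfolding P_def by simp
      have Gt: "0 \<le> G (lsum k l)" using G_nn[OF t1] .
      have mm: "Suc (m q - 1) = m q" using m2 by simp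
      have hr: "h (m q) (l q) \<le> h 1 1 * h (m q - 1) (l q - 1) + real N * h (m q - 1) (l q)"
        using hrec[of "l q" "m q - 1"] Pl[OF l] mN mm by simp
      have "G (lsum k l) * (h (m q) (l q) * R l)
         \<le> G (lsum k l) * ((h 1 1 * h (m q - 1) (l q - 1) + real N * h (m q - 1) (l q)) * R l)"
        using Gt R_nn hr by (intro mult_left_mono mult_right_mono) auto
      also have "\<dots> = h 1 1 * (G (lsum k l) * (h (m q - 1) (l q - 1) * R l))
           + real N * (G (lsum k l) * (h (m q - 1) (l q) * R l))"
        by (simp add: algebra_simps)
      also have "\<dots> \<le> h 1 1 * (G (lsum k l) * (h (m q - 1) (l q - 1) * R l))
           + real N * (D * G (Suc (lsum k l)) * (h (m q - 1) (l q) * R l))"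
        using G_mono[OF t1] h_nn R_nn
        by (intro add_left_mono mult_left_mono mult_right_mono mult_nonneg_nonneg) auto
      finally show "G (lsum k l) * (h (m q) (l q) * R l)
         \<le> h 1 1 * (G (lsum k l) * (h (m q - 1) (l q - 1) * R l))
            + real N * D * (G (Suc (lsum k l)) * (h (m q - 1) (l q) * R l))"
        by (simp add: algebra_simps)
    qed
    also have "\<dots> = h 1 1 * T1 + real N * D * T2"
      unfolding T1_def T2_def by (simp add: sum.distrib sum_distrib_left)
    finally show ?thesis .
  qed
  have T1eq: "h 1 1 * T1 = Ssum G h (Suc k) m'"
  proof -
    have "h 1 1 * T1 = (\<Sum>l\<in>P. h 1 1 * (G (lsum k l) * (h (m q - 1) (l q - 1) * R l)))"
      unfolding T1_def by (simp add: sum_distrib_left)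
    also have "\<dots> = (\<Sum>l\<in>Q. G (lsum (Suc k) l) * (h 1 (l (Suc k)) * (h (m q - 1) (l q) * R l)))"
    proof (rule sum.reindex_bij_witness_not_neutral[where S'="{l\<in>P. l q = 1}" and T'="{}"
          and j="\<lambda>l. (l(q := l q - 1))(Suc k := 1)" and i="\<lambda>l. (l(q := Suc (l q)))(Suc k := undefined)"])
      show "finite {l\<in>P. l q = 1}" using finP by simp
      show "finite {}" by simp
      fix a assume a: "a \<in> P - {l \<in> P. l q = 1}"
      then have aP: "a \<in> P" and a2: "a q \<noteq> 1" by auto
      have aSk: "a (Suc k) = undefined" using aP unfolding P_def by (auto simp: PiE_iff extensional_def)
      show "((a(q := a q - 1))(Suc k := 1))(q := Suc (((a(q := a q - 1))(Suc k := 1)) q), Suc k := undefined) = a"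
        using ell Pl[OF aP] aSk by (auto simp: fun_eq_iff)
      have aq: "2 \<le> a q" "a q - 1 \<le> m q - 1" using Pl[OF aP] a2 by auto
      show "(a(q := a q - 1))(Suc k := 1) \<in> Q - {}"
        using aP aq ell m'l m'k m'o unfolding P_def Q_def
        by (auto simp: PiE_iff extensional_def)
    next
      fix b assume b: "b \<in> Q - {}"
      then have bQ: "b \<in> Q" by simp
      have bSk: "b (Suc k) = 1"
      proof -
        have "b (Suc k) \<in> {1..m' (Suc k)}" using bQ unfolding Q_def by (auto simp: PiE_iff)
        then show ?thesis using m'k by simp
      qed
      show "((b(q := Suc (b q)))(Suc k := undefined))(q := ((b(q := Suc (b q)))(Suc k := undefined)) q - 1, Suc k := 1) = b"
        using ell bSk by (auto simp: fun_eq_iff)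
      have bi: "\<And>i. i \<in> {1..Suc k} \<Longrightarrow> 1 \<le> b i \<and> b i \<le> m' i"
        and bext: "\<And>x. x \<notin> {1..Suc k} \<Longrightarrow> b x = undefined"
        using bQ unfolding Q_def by (auto simp: PiE_iff extensional_def)
      have bq: "1 \<le> b q" "b q \<le> m q - 1" using bi[of q] ell m'l by auto
      have bo: "\<And>i. i\<in>{1..k} \<Longrightarrow> i \<noteq> q \<Longrightarrow> 1 \<le> b i \<and> b i \<le> m i" using bi m'o by force
      have inP: "(b(q := Suc (b q)))(Suc k := undefined) \<in> P"
        unfolding P_def using bq bo bext m2 ell by (auto simp: PiE_iff extensional_def)
      show "(b(q := Suc (b q)))(Suc k := undefined) \<in> P - {l \<in> P. l q = 1}"
        using inP bq ell by auto
    next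
      fix a assume a: "a \<in> {l\<in>P. l q = 1}"
      then show "h 1 1 * (G (lsum k a) * (h (m q - 1) (a q - 1) * R a)) = 0"
        using h0[of "m q - 1"] m2 by simp
    next
      fix b assume "b \<in> ({} :: (nat \<Rightarrow> nat) set)" then show "G (lsum (Suc k) b) * (h 1 (b (Suc k)) * (h (m q - 1) (b q) * R b)) = 0" by simp
    next
      fix a assume aP: "a \<in> P"
      let ?b = "(a(q := a q - 1))(Suc k := 1)"
      have Rb: "R ?b = R a" using ell by (intro R_cong) (auto simp: Oset_def)
      have sb: "(\<Sum>i\<in>Oset. ?b i) = (\<Sum>i\<in>Oset. a i)" using ell by (intro sum_cong) (auto simp: Oset_def)
      have lb: "lsum (Suc k) ?b = lsum k a"
        using sumB[of ?b] sumA[of a] sb Pl[OF aP] ell by simp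
      show "G (lsum (Suc k) ?b) * (h 1 (?b (Suc k)) * (h (m q - 1) (?b q) * R ?b))
          = h 1 1 * (G (lsum k a) * (h (m q - 1) (a q - 1) * R a))"
        using lb Rb ell by simp
    qed
    finally show ?thesis using SB by simp
  qed
  have T2eq: "h 1 1 * T2 = Ssum G h (Suc k) m'"
  proof -
    have "h 1 1 * T2 = (\<Sum>l\<in>P. h 1 1 * (G (Suc (lsum k l)) * (h (m q - 1) (l q) * R l)))"
      unfolding T2_def by (simp add: sum_distrib_left)
    also have "\<dots> = (\<Sum>l\<in>Q. G (lsum (Suc k) l) * (h 1 (l (Suc k)) * (h (m q - 1) (l q) * R l)))"
    proof (rule sum.reindex_bij_witness_not_neutral[where S'="{l\<in>P. l q = m q}" and T'="{}"
          and j="\<lambda>l. l(Suc k := 1)" and i="\<lambda>l. l(Suc k := undefined)"])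
      show "finite {l\<in>P. l q = m q}" using finP by simp
      show "finite {}" by simp
      fix a assume a: "a \<in> P - {l \<in> P. l q = m q}"
      then have aP: "a \<in> P" and a2: "a q \<noteq> m q" by auto
      have aSk: "a (Suc k) = undefined" using aP unfolding P_def by (auto simp: PiE_iff extensional_def)
      show "(a(Suc k := 1))(Suc k := undefined) = a"
        using aSk by (auto simp: fun_eq_iff)
      have ai: "\<And>i. i \<in> {1..k} \<Longrightarrow> 1 \<le> a i \<and> a i \<le> m i"
        and aext: "\<And>x. x \<notin> {1..k} \<Longrightarrow> a x = undefined"
        using aP unfolding P_def by (auto simp: PiE_iff extensional_def)
      have aq: "a q \<le> m' q" using ai[of q] a2 ell m'l by auto
      have ao: "\<And>i. i\<in>{1..k} \<Longrightarrow> a i \<le> m' i" using ai aq m'o by (metis)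
      have "a(Suc k := 1) \<in> Q"
        unfolding Q_def using ai ao aext m'k by (auto simp: PiE_iff extensional_def)
      then show "a(Suc k := 1) \<in> Q - {}" by simp
    next
      fix b assume b: "b \<in> Q - {}"
      then have bQ: "b \<in> Q" by simp
      have bSk: "b (Suc k) = 1"
      proof -
        have "b (Suc k) \<in> {1..m' (Suc k)}" using bQ unfolding Q_def by (auto simp: PiE_iff)
        then show ?thesis using m'k by simp
      qed
      show "(b(Suc k := undefined))(Suc k := 1) = b"
        using bSk by (auto simp: fun_eq_iff)
      have bi: "\<And>i. i \<in> {1..Suc k} \<Longrightarrow> 1 \<le> b i \<and> b i \<le> m' i"
        and bext: "\<And>x. x \<notin> {1..Suc k} \<Longrightarrow> b x = undefined"
        using bQ unfolding Q_def by (auto simp: PiE_iff extensional_def)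
      have bq: "1 \<le> b q" "b q \<le> m q - 1" using bi[of q] ell m'l by auto
      have bo: "\<And>i. i\<in>{1..k} \<Longrightarrow> i \<noteq> q \<Longrightarrow> 1 \<le> b i \<and> b i \<le> m i" using bi m'o by force
      have ball: "\<And>i. i\<in>{1..k} \<Longrightarrow> 1 \<le> b i \<and> b i \<le> m i"
      proof -
        fix i assume i: "i \<in> {1..k}"
        show "1 \<le> b i \<and> b i \<le> m i"
        proof (cases "i = q")
          case True then show ?thesis using bq by auto
        next
          case False then show ?thesis using bo i by auto
        qed
      qed
      have inP: "b(Suc k := undefined) \<in> P"
        unfolding P_def using ball bext by (auto simp: PiE_iff extensional_def)
      show "b(Suc k := undefined) \<in> P - {l \<in> P. l q = m q}"
        using inP bq ell m2 by auto
    next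
      fix a assume a: "a \<in> {l\<in>P. l q = m q}"
      then show "h 1 1 * (G (Suc (lsum k a)) * (h (m q - 1) (a q) * R a)) = 0"
        using hbig[of "m q - 1" "m q"] m2 by simp
    next
      fix b assume "b \<in> ({} :: (nat \<Rightarrow> nat) set)" then show "G (lsum (Suc k) b) * (h 1 (b (Suc k)) * (h (m q - 1) (b q) * R b)) = 0" by simp
    next
      fix a assume aP: "a \<in> P"
      let ?b = "a(Suc k := 1)"
      have Rb: "R ?b = R a" using ell by (intro R_cong) (auto simp: Oset_def)
      have sb: "(\<Sum>i\<in>Oset. ?b i) = (\<Sum>i\<in>Oset. a i)" using ell by (intro sum_cong) (auto simp: Oset_def)
      have lb: "lsum (Suc k) ?b = Suc (lsum k a)"
        using sumB[of ?b] sumA[of a] sb ell by simp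
      show "G (lsum (Suc k) ?b) * (h 1 (?b (Suc k)) * (h (m q - 1) (?b q) * R ?b))
          = h 1 1 * (G (Suc (lsum k a)) * (h (m q - 1) (a q) * R a))"
        using lb Rb ell by simp
    qed
    finally show ?thesis using SB by simp
  qed
  have "Ssum G h k m \<le> Ssum G h (Suc k) m' + real N * D * (Ssum G h (Suc k) m' / h 1 1)"
  proof -
    have T2v: "T2 = Ssum G h (Suc k) m' / h 1 1" using T2eq h11 by (simp add: field_simps)
    show ?thesis using step T1eq T2v by simp
  qed
  also have "\<dots> = (1 + real N * D / h 1 1) * Ssum G h (Suc k) m'"
    by (simp add: algebra_simps)
  finally show ?thesis .
qed



lemma powexp_int_pos:
  assumes a: "0 < a" and c: "c > -1"
  shows "(\<lambda>s::real. s powr c * exp (- s)) integrable_on {a..}"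
proof -
  have "((\<lambda>t. t powr ((c+1) - 1) / exp t) has_integral Gamma (c+1)) {0..}"
    using Gamma_integral_real[of "c+1"] c by simp
  then have i0: "(\<lambda>t. t powr c / exp t) integrable_on {0..}" by (auto simp: integrable_on_def)
  have "(\<lambda>t. t powr c / exp t) absolutely_integrable_on {0..}"
    by (rule nonnegative_absolutely_integrable_1[OF i0]) auto
  then have "(\<lambda>t. t powr c / exp t) absolutely_integrable_on {a..}"
    by (rule set_integrable_subset) (use a in auto)
  then have "(\<lambda>t. t powr c / exp t) integrable_on {a..}"
    using absolutely_integrable_on_def by blast
  then show ?thesis by (rule integrable_eq) (simp add: exp_minus field_simps)
qed

lemma powexp_int:
  assumes a: "0 < a"
  shows "(\<lambda>s::real. s powr c * exp (- s)) integrable_on {a..}"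
proof (cases "c > -1")
  case True then show ?thesis using powexp_int_pos a by blast
next
  case False
  have g: "(\<lambda>s::real. a powr c * (s powr 0 * exp (- s))) integrable_on {a..}"
    using powexp_int_pos[OF a, of 0] by (intro integrable_on_mult_right) auto
  have meas: "(\<lambda>s::real. s powr c * exp (- s)) \<in> borel_measurable (lebesgue_on {a..})"
  proof (rule continuous_imp_measurable_on_sets_lebesgue)
    show "continuous_on {a..} (\<lambda>s::real. s powr c * exp (- s))"
      using a by (intro continuous_intros) auto
  qed auto
  have "(\<lambda>s::real. s powr c * exp (- s)) absolutely_integrable_on {a..}"
  proof (rule measurable_bounded_by_integrable_imp_absolutely_integrable[OF meas _ g])
    show "{a..} \<in> sets lebesgue" by simp
    fix x :: real assume x: "x \<in> {a..}"
    then have xp: "x > 0" using a by auto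
    have "x powr c \<le> a powr c" using powr_mono2'[of c a x] False a x by auto
    then show "norm (x powr c * exp (- x)) \<le> a powr c * (x powr 0 * exp (- x))"
      using xp by (simp add: abs_mult)
  qed
  then show ?thesis using absolutely_integrable_on_def by blast
qed

definition Wf :: "real \<Rightarrow> real \<Rightarrow> nat \<Rightarrow> real \<Rightarrow> real" where
  "Wf \<sigma> \<beta> n s = (1 - (\<beta> / s) powr (1 / \<sigma>)) ^ (n - 1)"

lemma Wf_bounds:
  assumes "0 < \<sigma>" "0 < \<beta>" "\<beta> \<le> s"
  shows "0 \<le> Wf \<sigma> \<beta> n s"
proof -
  have "(\<beta> / s) powr (1 / \<sigma>) \<le> 1" using assms by (intro powr_le1) auto
  then show ?thesis unfolding Wf_def by simp
qed

lemma Wf_expand: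
  assumes "0 < \<sigma>" "0 < \<beta>" "\<beta> \<le> s" "1 \<le> n"
  shows "s powr (real m - 1) * exp (- s) * Wf \<sigma> \<beta> n s
       = (\<Sum>i=0..n-1. real (n - 1 choose i) * (-1) ^ i * \<beta> powr (real i / \<sigma>)
           * (s powr ((real m - real i / \<sigma>) - 1) * exp (- s)))"
proof -
  have sp: "0 < s" using assms by auto
  define x where "x = (\<beta> / s) powr (1 / \<sigma>)"
  have bb: "(1 - x)^(n-1) = (\<Sum>k\<le>n-1. real (n-1 choose k) * (-x)^k)"
    using binomial_ring[of "- x" 1 "n - 1"] by simp
  have "Wf \<sigma> \<beta> n s = (1 - x)^(n-1)" unfolding Wf_def x_def ..
  also have "\<dots> = (\<Sum>i=0..n-1. real (n - 1 choose i) * (-x) ^ i)"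
    unfolding bb atLeast0AtMost ..
  also have "\<dots> = (\<Sum>i=0..n-1. real (n - 1 choose i) * (-1) ^ i * x ^ i)"
    by (intro sum.cong refl) (metis power_minus[of x] mult.assoc)
  finally have W: "Wf \<sigma> \<beta> n s = (\<Sum>i=0..n-1. real (n - 1 choose i) * (-1) ^ i * x ^ i)" .
  have trm: "s powr (real m - 1) * exp (- s) * (real (n - 1 choose i) * (-1) ^ i * x ^ i)
     = real (n - 1 choose i) * (-1) ^ i * \<beta> powr (real i / \<sigma>)
           * (s powr ((real m - real i / \<sigma>) - 1) * exp (- s))" for i
  proof -
    have "x ^ i = (\<beta> / s) powr (real i / \<sigma>)"
      unfolding x_def using assms sp
      by (simp add: powr_realpow[symmetric] powr_powr)
    also have "\<dots> = \<beta> powr (real i / \<sigma>) / s powr (real i / \<sigma>)"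
      by (simp add: powr_divide)
    finally have xi: "x ^ i = \<beta> powr (real i / \<sigma>) / s powr (real i / \<sigma>)" .
    have "s powr ((real m - real i / \<sigma>) - 1) = s powr (real m - 1) / s powr (real i / \<sigma>)"
      by (simp add: powr_diff[symmetric] algebra_simps)
    then show ?thesis unfolding xi by (simp add: field_simps)
  qed
  show ?thesis unfolding W sum_distrib_left by (rule sum.cong[OF refl]) (rule trm)
qed

lemma V_repr:
  assumes s: "0 < \<sigma>" and b: "0 < \<beta>" and n: "1 \<le> n"
  shows "V_NGG \<sigma> \<beta> n m = exp \<beta> * \<sigma> ^ (m - 1) / Gamma (real n)
           * integral {\<beta>..} (\<lambda>s. s powr (real m - 1) * exp (- s) * Wf \<sigma> \<beta> n s)"
    and "(\<lambda>s. s powr (real m - 1) * exp (- s) * Wf \<sigma> \<beta> n s) integrable_on {\<beta>..}"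
proof -
  let ?f = "\<lambda>i s. real (n - 1 choose i) * (-1) ^ i * \<beta> powr (real i / \<sigma>)
           * (s powr ((real m - real i / \<sigma>) - 1) * exp (- s))"
  have fi: "?f i integrable_on {\<beta>..}" for i
    by (intro integrable_on_mult_right powexp_int b)
  have "(\<lambda>s. \<Sum>i=0..n-1. ?f i s) integrable_on {\<beta>..}"
    by (intro integrable_sum fi) auto
  then show "(\<lambda>s. s powr (real m - 1) * exp (- s) * Wf \<sigma> \<beta> n s) integrable_on {\<beta>..}"
    by (rule integrable_eq) (use Wf_expand[OF s b _ n] in auto)
  have "integral {\<beta>..} (\<lambda>s. s powr (real m - 1) * exp (- s) * Wf \<sigma> \<beta> n s)
      = integral {\<beta>..} (\<lambda>s. \<Sum>i=0..n-1. ?f i s)"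
    by (intro integral_cong) (use Wf_expand[OF s b _ n] in auto)
  also have "\<dots> = (\<Sum>i=0..n-1. integral {\<beta>..} (?f i))"
    by (intro integral_sum fi) auto
  also have "\<dots> = (\<Sum>i=0..n-1. real (n - 1 choose i) * (-1) ^ i * \<beta> powr (real i / \<sigma>)
                    * upper_gamma (real m - real i / \<sigma>) \<beta>)"
    unfolding upper_gamma_def by simp
  finally show "V_NGG \<sigma> \<beta> n m = exp \<beta> * \<sigma> ^ (m - 1) / Gamma (real n)
           * integral {\<beta>..} (\<lambda>s. s powr (real m - 1) * exp (- s) * Wf \<sigma> \<beta> n s)"
    unfolding V_NGG_def by simp
qed

lemma V_nonneg:
  assumes s: "0 < \<sigma>" and b: "0 < \<beta>" and n: "1 \<le> n"
  shows "0 \<le> V_NGG \<sigma> \<beta> n m"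
proof -
  have "0 \<le> integral {\<beta>..} (\<lambda>s. s powr (real m - 1) * exp (- s) * Wf \<sigma> \<beta> n s)"
    by (rule integral_nonneg[OF V_repr(2)[OF s b n]]) (use Wf_bounds[OF s b] in auto)
  moreover have "0 < Gamma (real n)" using n by simp
  ultimately show ?thesis unfolding V_repr(1)[OF s b n] using s by simp
qed

lemma V_mono:
  assumes s: "0 < \<sigma>" and b: "0 < \<beta>" and n: "1 \<le> n" and m: "1 \<le> m"
  shows "V_NGG \<sigma> \<beta> n m \<le> (1 / (\<sigma> * \<beta>)) * V_NGG \<sigma> \<beta> n (Suc m)"
proof -
  define I where "I m = integral {\<beta>..} (\<lambda>s. s powr (real m - 1) * exp (- s) * Wf \<sigma> \<beta> n s)" for m
  have "integral {\<beta>..} (\<lambda>s. \<beta> * (s powr (real m - 1) * exp (- s) * Wf \<sigma> \<beta> n s))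
      \<le> integral {\<beta>..} (\<lambda>s. s powr (real (Suc m) - 1) * exp (- s) * Wf \<sigma> \<beta> n s)"
  proof (rule integral_le)
    show "(\<lambda>s. \<beta> * (s powr (real m - 1) * exp (- s) * Wf \<sigma> \<beta> n s)) integrable_on {\<beta>..}"
      by (intro integrable_on_mult_right V_repr(2)[OF s b n])
    show "(\<lambda>s. s powr (real (Suc m) - 1) * exp (- s) * Wf \<sigma> \<beta> n s) integrable_on {\<beta>..}"
      by (rule V_repr(2)[OF s b n])
    fix x assume x: "x \<in> {\<beta>..}"
    then have xp: "0 < x" "\<beta> \<le> x" using b by auto
    have "x powr (real (Suc m) - 1) = x * x powr (real m - 1)"
      using xp by (simp add: powr_add[symmetric] powr_diff)
    moreover have "0 \<le> x powr (real m - 1) * exp (- x) * Wf \<sigma> \<beta> n x"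
      using Wf_bounds[OF s b xp(2)] by simp
    ultimately show "\<beta> * (x powr (real m - 1) * exp (- x) * Wf \<sigma> \<beta> n x)
        \<le> x powr (real (Suc m) - 1) * exp (- x) * Wf \<sigma> \<beta> n x"
      using xp mult_right_mono[OF xp(2), of "x powr (real m - 1) * exp (- x) * Wf \<sigma> \<beta> n x"]
      by (simp add: mult.assoc)
  qed
  then have Ile: "\<beta> * I m \<le> I (Suc m)" unfolding I_def by simp
  have In: "0 \<le> I m" unfolding I_def
    by (rule integral_nonneg[OF V_repr(2)[OF s b n]]) (use Wf_bounds[OF s b] in auto)
  have g: "0 < Gamma (real n)" using n by simp
  have sm: "\<sigma> ^ (Suc m - 1) = \<sigma> * \<sigma> ^ (m - 1)" using m by (cases m) auto
  have "V_NGG \<sigma> \<beta> n m = exp \<beta> * \<sigma> ^ (m - 1) / Gamma (real n) * I m"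
    unfolding I_def by (rule V_repr(1)[OF s b n])
  also have "\<dots> \<le> exp \<beta> * \<sigma> ^ (m - 1) / Gamma (real n) * (I (Suc m) / \<beta>)"
    using Ile b g s by (intro mult_left_mono) (auto simp: field_simps)
  also have "\<dots> = (1 / (\<sigma> * \<beta>)) * (exp \<beta> * \<sigma> ^ (Suc m - 1) / Gamma (real n) * I (Suc m))"
    using s b unfolding sm by (simp add: field_simps)
  also have "\<dots> = (1 / (\<sigma> * \<beta>)) * V_NGG \<sigma> \<beta> n (Suc m)"
    unfolding I_def by (simp add: V_repr(1)[OF s b n])
  finally show ?thesis .
qed



lemma gfc_1_1: "gfc 1 1 \<sigma> = \<sigma>"
  using gfc_rec[of 1 0 \<sigma>] gfc_0_0[of \<sigma>] gfc_0_l[of 1 \<sigma>] by simp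

lemma gfc_h:
  assumes s: "0 < \<sigma>" "\<sigma> < 1" and r: "0 < r"
  defines "h \<equiv> \<lambda>M l. gfc M l \<sigma> / r ^ l"
  shows "\<And>M l. 0 \<le> h M l" "\<And>M. 1 \<le> M \<Longrightarrow> h M 0 = 0" "\<And>M l. M < l \<Longrightarrow> h M l = 0"
    "\<And>M l. 1 \<le> l \<Longrightarrow> Suc M \<le> N \<Longrightarrow> h (Suc M) l \<le> h 1 1 * h M (l - 1) + real N * h M l"
    "h 1 1 = \<sigma> / r"
proof -
  show "0 \<le> h M l" for M l using gfc_props[OF s, of M] r unfolding h_def by simp
  show "h M 0 = 0" if "1 \<le> M" for M using gfc_n_0[OF that] unfolding h_def by simp
  show "h M l = 0" if "M < l" for M l using gfc_props[OF s, of M] that unfolding h_def by simp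
  show h11: "h 1 1 = \<sigma> / r" unfolding h_def using gfc_1_1 by simp
  show "h (Suc M) l \<le> h 1 1 * h M (l - 1) + real N * h M l" if l: "1 \<le> l" and MN: "Suc M \<le> N" for M l
  proof -
    have g: "0 \<le> gfc M l \<sigma>" using gfc_props[OF s, of M] by simp
    have rl: "r ^ l = r * r ^ (l - 1)" using l by (cases l) auto
    have "h (Suc M) l = (\<sigma> * gfc M (l - 1) \<sigma> + (real M - real l * \<sigma>) * gfc M l \<sigma>) / r ^ l"
      unfolding h_def using gfc_rec[OF l] by simp
    also have "\<dots> = h 1 1 * h M (l - 1) + (real M - real l * \<sigma>) * h M l"
      unfolding h11 unfolding h_def rl using r by (simp add: field_simps)
    also have "\<dots> \<le> h 1 1 * h M (l - 1) + real N * h M l"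
    proof -
      have "real M - real l * \<sigma> \<le> real N" using MN s by (smt (verit) of_nat_0_le_iff of_nat_le_iff
          mult_nonneg_nonneg Suc_leD)
      moreover have "0 \<le> h M l" unfolding h_def using g r by simp
      ultimately show ?thesis by (intro add_left_mono mult_right_mono) auto
    qed
    finally show ?thesis .
  qed
qed

lemma split_struct:
  assumes A: "A \<in> ord_parts n k" and B: "B \<in> split_parts n k A"
  shows "\<exists>q. q \<in> {1..k} \<and> 2 \<le> bsize n A q \<and> bsize n B q = bsize n A q - 1
     \<and> bsize n B (Suc k) = 1 \<and> (\<forall>i. i \<in> {1..k} \<longrightarrow> i \<noteq> q \<longrightarrow> bsize n B i = bsize n A i)
     \<and> bsize n A q \<le> n"
proof -
  obtain j where j: "j \<in> {1..n}" and jb: "2 \<le> bsize n A (A j)" and Bd: "B = A(j := k + 1)"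
    using B unfolding split_parts_def by auto
  have Ar: "\<And>i. i \<in> {1..n} \<Longrightarrow> A i \<in> {1..k}" using A unfolding ord_parts_def by auto
  define q where "q = A j"
  have q: "q \<in> {1..k}" using Ar[OF j] q_def by simp
  have s1: "{i\<in>{1..n}. B i = q} = {i\<in>{1..n}. A i = q} - {j}"
    using q unfolding Bd by auto
  have jin: "j \<in> {i\<in>{1..n}. A i = q}" using j q_def by simp
  have b1: "bsize n B q = bsize n A q - 1"
    unfolding bsize_def s1 using jin by (simp add: card_Diff_singleton)
  have s2: "{i\<in>{1..n}. B i = Suc k} = {j}"
    using j Ar unfolding Bd by force
  have b2: "bsize n B (Suc k) = 1" unfolding bsize_def s2 by simp
  have b3: "bsize n B i = bsize n A i" if "i \<in> {1..k}" "i \<noteq> q" for i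
  proof -
    have "{i'\<in>{1..n}. B i' = i} = {i'\<in>{1..n}. A i' = i}"
      using that q_def unfolding Bd by auto
    then show ?thesis unfolding bsize_def by simp
  qed
  have b4: "bsize n A q \<le> n"
  proof -
    have "card {i\<in>{1..n}. A i = q} \<le> card {1..n}" by (intro card_mono) auto
    then show ?thesis unfolding bsize_def by simp
  qed
  show ?thesis using q jb b1 b2 b3 b4 unfolding q_def by blast
qed

lemma finite_ord_parts: "finite (ord_parts n k)"
proof -
  have "ord_parts n k \<subseteq> {f. \<forall>x. (x \<in> {1..n} \<longrightarrow> f x \<in> {1..k}) \<and> (x \<notin> {1..n} \<longrightarrow> f x = 0)}"
    unfolding ord_parts_def by auto
  moreover have "finite {f. \<forall>x. (x \<in> {1..n} \<longrightarrow> f x \<in> {1..k}) \<and> (x \<notin> {1..n} \<longrightarrow> f x = (0::nat))}"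
    by (rule finite_set_of_finite_funs) auto
  ultimately show ?thesis by (rule finite_subset)
qed

lemma finite_split_parts: "finite (split_parts n k f)"
proof -
  have "split_parts n k f \<subseteq> (\<lambda>j. f(j := k + 1)) ` {1..n}"
    unfolding split_parts_def by auto
  then show ?thesis by (rule finite_subset) auto
qed

lemma nonempty_parts:
  assumes "1 \<le> k" "k < n"
  shows "\<exists>A B. A \<in> ord_parts n k \<and> B \<in> split_parts n k A"
proof -
  define A where "A i = (if i \<in> {1..n} then min i k else 0)" for i
  have A: "A \<in> ord_parts n k"
    unfolding ord_parts_def
  proof (intro CollectI conjI ballI allI impI)
    fix i assume "i \<in> {1..n}" then show "A i \<in> {1..k}" using assms unfolding A_def by auto
  next
    fix i assume "i \<notin> {1..n}" then show "A i = 0" unfolding A_def by auto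
  next
    fix j assume "j \<in> {1..k}" then show "\<exists>i\<in>{1..n}. A i = j"
      using assms unfolding A_def by (intro bexI[of _ j]) auto
  qed
  have "{k, n} \<subseteq> {i\<in>{1..n}. A i = k}" using assms unfolding A_def by auto
  then have "card {k, n} \<le> bsize n A k" unfolding bsize_def by (intro card_mono) auto
  then have "2 \<le> bsize n A (A n)" using assms unfolding A_def by auto
  then have "A(n := k + 1) \<in> split_parts n k A"
    unfolding split_parts_def using assms by auto
  then show ?thesis using A by blast
qed

lemma ratio_le:
  assumes "0 \<le> x" "0 \<le> y" "x \<le> C * y" "0 \<le> C"
  shows "ratio x y \<le> ereal C"
proof (cases "y = 0")
  case True then have "x = 0" using assms by simp
  then show ?thesis using True assms unfolding ratio_def by simp
next
  case False then have "y > 0" using assms by simp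
  then show ?thesis using assms unfolding ratio_def by (simp add: field_simps)
qed

lemma limsup_bound:
  fixes p :: "nat \<Rightarrow> nat \<Rightarrow> (nat \<Rightarrow> nat) \<Rightarrow> real"
  assumes k: "1 \<le> k" and M: "0 \<le> M"
    and H: "\<And>n A B. k < n \<Longrightarrow> A \<in> ord_parts n k \<Longrightarrow> B \<in> split_parts n k A \<Longrightarrow>
        0 \<le> p n k A \<and> 0 \<le> p n (Suc k) B \<and> p n k A \<le> M * real n * p n (Suc k) B"
  shows "limsup (\<lambda>n. c_seq p n k) < \<infinity>"
proof -
  have ev: "c_seq p n k \<le> ereal M" if n: "Suc k \<le> n" for n
  proof -
    let ?X = "{ratio (p n k A) (p n (k+1) B) | A B. A \<in> ord_parts n k \<and> B \<in> split_parts n k A}"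
    have Xe: "?X = (\<lambda>(A,B). ratio (p n k A) (p n (k+1) B)) ` (SIGMA A:ord_parts n k. split_parts n k A)"
      by auto
    have fin: "finite ?X" unfolding Xe
      by (intro finite_imageI finite_SigmaI finite_ord_parts finite_split_parts)
    have ne: "?X \<noteq> {}" using nonempty_parts[OF k, of n] n by auto
    have bd: "Max ?X \<le> ereal (M * real n)"
    proof (rule Max.boundedI[OF fin ne])
      fix a assume "a \<in> ?X"
      then obtain A B where AB: "A \<in> ord_parts n k" "B \<in> split_parts n k A"
        and a: "a = ratio (p n k A) (p n (k+1) B)" by blast
      have "k < n" using n by simp
      from H[OF this AB] show "a \<le> ereal (M * real n)" unfolding a
        by (intro ratio_le) (use M in auto)
    qed
    have "c_seq p n k = ereal (1 / real n) * Max ?X"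
      unfolding c_seq_def using n by simp
    also have "\<dots> \<le> ereal (1 / real n) * ereal (M * real n)"
      by (rule ereal_mult_left_mono[OF bd]) simp
    also have "\<dots> = ereal M" using n by simp
    finally show ?thesis .
  qed
  have "limsup (\<lambda>n. c_seq p n k) \<le> ereal M"
    by (rule Limsup_bounded) (use ev in \<open>auto simp: eventually_sequentially\<close>)
  then show ?thesis using order_le_less_trans[of _ "ereal M" \<infinity>] by auto
qed



lemma final_arith:
  fixes cA cB SA SB E n :: real
  assumes "0 \<le> cA" "0 < cB" "0 \<le> SB" "0 \<le> E" "1 \<le> n" "SA \<le> (1 + n * E) * SB"
  shows "cA * SA \<le> (cA / cB * (1 + E)) * n * (cB * SB)"
proof -
  have "cA * SA \<le> cA * ((1 + n * E) * SB)" using assms by (intro mult_left_mono) auto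
  also have "\<dots> \<le> cA * ((1 + E) * n * SB)"
  proof -
    have "1 + n * E \<le> (1 + E) * n" using assms by (simp add: algebra_simps)
    then show ?thesis using assms by (intro mult_left_mono mult_right_mono) auto
  qed
  also have "\<dots> = (cA / cB * (1 + E)) * n * (cB * SB)" using assms by (simp add: field_simps)
  finally show ?thesis .
qed

lemma ssum_bound:
  fixes G :: "nat \<Rightarrow> real" and h :: "nat \<Rightarrow> nat \<Rightarrow> real"
  assumes A: "A \<in> ord_parts n k" and B: "B \<in> split_parts n k A" and k: "1 \<le> k"
    and h_nn: "\<And>M l. 0 \<le> h M l" and h0: "\<And>M. 1 \<le> M \<Longrightarrow> h M 0 = 0"
    and hbig: "\<And>M l. M < l \<Longrightarrow> h M l = 0"
    and hrec: "\<And>M l. 1 \<le> l \<Longrightarrow> Suc M \<le> n \<Longrightarrow> h (Suc M) l \<le> h 1 1 * h M (l - 1) + real n * h M l"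
    and h11: "0 < h 1 1"
    and G_nn: "\<And>t. 1 \<le> t \<Longrightarrow> 0 \<le> G t" and D: "0 \<le> D"
    and G_mono: "\<And>t. 1 \<le> t \<Longrightarrow> G t \<le> D * G (Suc t)"
  shows "0 \<le> Ssum G h k (bsize n A) \<and> 0 \<le> Ssum G h (Suc k) (bsize n B)
     \<and> Ssum G h k (bsize n A) \<le> (1 + real n * (D / h 1 1)) * Ssum G h (Suc k) (bsize n B)"
proof -
  obtain q where q: "q \<in> {1..k}" "2 \<le> bsize n A q" "bsize n B q = bsize n A q - 1"
     "bsize n B (Suc k) = 1" "\<And>i. i \<in> {1..k} \<Longrightarrow> i \<noteq> q \<Longrightarrow> bsize n B i = bsize n A i"
     "bsize n A q \<le> n"
    using split_struct[OF A B] by blast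
  have "Ssum G h k (bsize n A) \<le> (1 + real n * D / h 1 1) * Ssum G h (Suc k) (bsize n B)"
    by (rule key_sum[where q=q and k=k and m="bsize n A" and m'="bsize n B" and N=n and h=h and G=G and D=D])
      (use q h_nn h0 hbig hrec h11 G_nn D G_mono in auto)
  moreover have "0 \<le> Ssum G h k (bsize n A)" by (rule Ssum_nonneg[OF k G_nn h_nn])
  moreover have "0 \<le> Ssum G h (Suc k) (bsize n B)" by (rule Ssum_nonneg[OF _ G_nn h_nn]) auto
  ultimately show ?thesis by simp
qed

lemma DM_bound:
  assumes k: "1 \<le> k" "Suc k \<le> K" and a: "0 < \<alpha>" and n: "k < n"
    and A: "A \<in> ord_parts n k" and B: "B \<in> split_parts n k A"
  defines "M \<equiv> real (K choose k) / real (K choose Suc k) * ((\<alpha> / real K + 1) / (\<alpha> / real K))"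
  shows "0 \<le> p_DM K \<alpha> n k A \<and> 0 \<le> p_DM K \<alpha> n (Suc k) B \<and> p_DM K \<alpha> n k A \<le> M * real n * p_DM K \<alpha> n (Suc k) B"
proof -
  obtain q where q: "q \<in> {1..k}" "2 \<le> bsize n A q" "bsize n B q = bsize n A q - 1"
     "bsize n B (Suc k) = 1" "\<And>i. i \<in> {1..k} \<Longrightarrow> i \<noteq> q \<Longrightarrow> bsize n B i = bsize n A i"
     "bsize n A q \<le> n"
    using split_struct[OF A B] by blast
  define c where "c = \<alpha> / real K"
  have c: "0 < c" unfolding c_def using a k by simp
  define P where "P = pochhammer \<alpha> n"
  have P: "0 < P" unfolding P_def using a by (simp add: pochhammer_pos)
  define R where "R = (\<Prod>i\<in>{1..k} - {q}. pochhammer c (bsize n A i))"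
  have R: "0 \<le> R" unfolding R_def using c by (intro prod_nonneg) (auto intro: pochhammer_nonneg)
  define X where "X = pochhammer c (bsize n A q - 1) * R"
  have X: "0 \<le> X" unfolding X_def using c R by (intro mult_nonneg_nonneg pochhammer_nonneg) auto
  have pa: "(\<Prod>i\<in>{1..k}. pochhammer c (bsize n A i)) = pochhammer c (bsize n A q) * R"
    unfolding R_def using q(1) by (simp add: prod.remove)
  have pq: "pochhammer c (bsize n A q) = pochhammer c (bsize n A q - 1) * (c + real (bsize n A q - 1))"
    using pochhammer_Suc[of c "bsize n A q - 1"] q(2) by (simp add: Suc_diff_Suc numeral_2_eq_2)
  have pb: "(\<Prod>i\<in>{1..Suc k}. pochhammer c (bsize n B i)) = X * c"
  proof -
    have "(\<Prod>i\<in>{1..Suc k}. pochhammer c (bsize n B i)) = (\<Prod>i\<in>{1..k}. pochhammer c (bsize n B i)) * pochhammer c (bsize n B (Suc k))"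
      by (simp add: prod.cl_ivl_Suc)
    also have "pochhammer c (bsize n B (Suc k)) = c" using q(4) by simp
    also have "(\<Prod>i\<in>{1..k}. pochhammer c (bsize n B i)) = pochhammer c (bsize n B q) * (\<Prod>i\<in>{1..k}-{q}. pochhammer c (bsize n B i))"
      using q(1) by (simp add: prod.remove)
    also have "(\<Prod>i\<in>{1..k}-{q}. pochhammer c (bsize n B i)) = R"
      unfolding R_def using q(5) by (intro prod.cong) auto
    finally show ?thesis unfolding X_def using q(3) by simp
  qed
  have pA: "p_DM K \<alpha> n k A = real (K choose k) / P * (X * (c + real (bsize n A q - 1)))"
    unfolding p_DM_def using k pa pq unfolding P_def c_def[symmetric] X_def by simp
  have pB: "p_DM K \<alpha> n (Suc k) B = real (K choose Suc k) / P * (X * c)"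
    unfolding p_DM_def using k pb unfolding P_def c_def[symmetric] by simp
  have bk1: "0 < real (K choose Suc k)" using k by simp
  have cn: "c + real (bsize n A q - 1) \<le> (c + 1) * real n"
  proof -
    have x: "real (bsize n A q - 1) \<le> real n" using q(6) by simp
    have "c \<le> c * real n" using c n by simp
    then show ?thesis using x by (simp add: algebra_simps)
  qed
  have "p_DM K \<alpha> n k A \<le> real (K choose k) / P * (X * ((c + 1) * real n))"
    unfolding pA using X P cn by (intro mult_left_mono) auto
  also have "\<dots> = M * real n * p_DM K \<alpha> n (Suc k) B"
    unfolding pB M_def c_def[symmetric] using c bk1 P by (simp add: field_simps)
  finally show ?thesis unfolding pA pB using X P c by simp
qed



lemma PY_bound:
  assumes k: "1 \<le> k" "Suc k \<le> K" and s: "0 < \<sigma>" "\<sigma> < 1" and a: "\<alpha> > - \<sigma>" and n: "k < n"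
    and A: "A \<in> ord_parts n k" and B: "B \<in> split_parts n k A"
  defines "M \<equiv> real (K choose k) / real (K choose Suc k) * (1 + (1 / (\<alpha> / \<sigma> + 1)) / (\<sigma> / real K))"
  shows "0 \<le> p_PY K \<sigma> \<alpha> n k A \<and> 0 \<le> p_PY K \<sigma> \<alpha> n (Suc k) B \<and> p_PY K \<sigma> \<alpha> n k A \<le> M * real n * p_PY K \<sigma> \<alpha> n (Suc k) B"
proof -
  define a where "a = \<alpha> / \<sigma>"
  have a1: "a > -1" unfolding a_def using a s by (simp add: field_simps)
  define G where "G t = Gamma (a + real t) / (\<sigma> * Gamma (a + 1))" for t :: nat
  define h where "h M l = gfc M l \<sigma> / real K ^ l" for M l
  define D where "D = 1 / (a + 1)"
  have Kp: "0 < real K" using k by simp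
  note hh = gfc_h[OF s Kp, folded h_def]
  have eq: "p_PY K \<sigma> \<alpha> n j f = (if j \<le> K then real (K choose j) / pochhammer (\<alpha> + 1) (n - 1) * Ssum G h j (bsize n f) else 0)" for j f
    unfolding p_PY_def Ssum_def lvecs_def G_def h_def a_def
    by (simp add: sum_distrib_left mult.assoc)
  have g1: "0 < Gamma (a + 1)" using a1 by simp
  have G_nn: "0 \<le> G t" if "1 \<le> t" for t
  proof -
    have "0 < a + real t" using a1 that by simp
    then show ?thesis unfolding G_def using g1 s by simp
  qed
  have D: "0 \<le> D" unfolding D_def using a1 by simp
  have G_mono: "G t \<le> D * G (Suc t)" if t: "1 \<le> t" for t
  proof -
    have z: "0 < a + real t" using a1 t by simp
    then have zn: "a + real t \<notin> \<int>\<^sub>\<le>\<^sub>0" using nonpos_Ints_nonpos by fastforce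
    have gs: "Gamma (a + real (Suc t)) = (a + real t) * Gamma (a + real t)"
    proof -
      have "a + real (Suc t) = (a + real t) + 1" by simp
      then show ?thesis using Gamma_plus1[OF zn] by metis
    qed
    have gp: "0 < Gamma (a + real t)" using z by simp
    have "1 \<le> (a + real t) / (a + 1)" using a1 t by simp
    then have "1 * Gamma (a + real t) \<le> (a + real t) / (a + 1) * Gamma (a + real t)"
      using gp by (intro mult_right_mono) auto
    then have "Gamma (a + real t) / (\<sigma> * Gamma (a + 1)) \<le> ((a + real t) / (a + 1) * Gamma (a + real t)) / (\<sigma> * Gamma (a + 1))"
      using s g1 by (intro divide_right_mono) auto
    also have "\<dots> = 1 / (a + 1) * ((a + real t) * Gamma (a + real t) / (\<sigma> * Gamma (a + 1)))"
      by simp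
    finally show ?thesis unfolding G_def D_def gs .

  qed
  have sb: "0 \<le> Ssum G h k (bsize n A) \<and> 0 \<le> Ssum G h (Suc k) (bsize n B)
     \<and> Ssum G h k (bsize n A) \<le> (1 + real n * (D / h 1 1)) * Ssum G h (Suc k) (bsize n B)"
    by (rule ssum_bound[OF A B k(1)]) (use hh G_nn D G_mono s Kp in auto)
  define P where "P = pochhammer (\<alpha> + 1) (n - 1)"
  have P: "0 < P" unfolding P_def using a s by (intro pochhammer_pos) simp
  have bk1: "0 < real (K choose Suc k)" using k by simp
  have pA: "p_PY K \<sigma> \<alpha> n k A = real (K choose k) / P * Ssum G h k (bsize n A)"
    unfolding eq P_def using k by simp
  have pB: "p_PY K \<sigma> \<alpha> n (Suc k) B = real (K choose Suc k) / P * Ssum G h (Suc k) (bsize n B)"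
    unfolding eq P_def using k by simp
  have E: "0 \<le> D / h 1 1" using D hh(5) s Kp by simp
  have Mq: "M = real (K choose k) / P / (real (K choose Suc k) / P) * (1 + D / h 1 1)"
    unfolding M_def D_def a_def hh(5) using P by simp
  have "p_PY K \<sigma> \<alpha> n k A \<le> M * real n * p_PY K \<sigma> \<alpha> n (Suc k) B"
    unfolding pA pB Mq
    by (rule final_arith) (use sb P bk1 E n in auto)
  then show ?thesis unfolding pA pB using sb P by simp
qed

lemma NGG_bound:
  assumes k: "1 \<le> k" "Suc k \<le> K" and s: "0 < \<sigma>" "\<sigma> < 1" and b: "\<beta> > 0" and n: "k < n"
    and A: "A \<in> ord_parts n k" and B: "B \<in> split_parts n k A"
  defines "M \<equiv> real (K choose k) / real (K choose Suc k) * (1 + (real K / (\<sigma> * \<beta>)) / (\<sigma> / \<sigma>))"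
  shows "0 \<le> p_NGG K \<sigma> \<beta> n k A \<and> 0 \<le> p_NGG K \<sigma> \<beta> n (Suc k) B \<and> p_NGG K \<sigma> \<beta> n k A \<le> M * real n * p_NGG K \<sigma> \<beta> n (Suc k) B"
proof -
  define G where "G t = V_NGG \<sigma> \<beta> n t / real K ^ t" for t :: nat
  define h where "h M l = gfc M l \<sigma> / \<sigma> ^ l" for M l
  define D where "D = real K / (\<sigma> * \<beta>)"
  have Kp: "0 < real K" using k by simp
  have n1: "1 \<le> n" using n k by simp
  note hh = gfc_h[OF s s(1), folded h_def]
  have eq: "p_NGG K \<sigma> \<beta> n j f = (if j \<le> K then real (K choose j) * Ssum G h j (bsize n f) else 0)" for j f
    unfolding p_NGG_def Ssum_def lvecs_def G_def h_def by simp
  have G_nn: "0 \<le> G t" for t unfolding G_def using V_nonneg[OF s(1) b n1] Kp by simp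
  have D: "0 \<le> D" unfolding D_def using s b by simp
  have G_mono: "G t \<le> D * G (Suc t)" if t: "1 \<le> t" for t
  proof -
    have "V_NGG \<sigma> \<beta> n t \<le> 1 / (\<sigma> * \<beta>) * V_NGG \<sigma> \<beta> n (Suc t)" by (rule V_mono[OF s(1) b n1 t])
    then have "V_NGG \<sigma> \<beta> n t / real K ^ t \<le> (1 / (\<sigma> * \<beta>) * V_NGG \<sigma> \<beta> n (Suc t)) / real K ^ t"
      using Kp by (intro divide_right_mono) auto
    also have "\<dots> = D * G (Suc t)" unfolding D_def G_def using Kp s b by (simp add: field_simps)
    finally show ?thesis unfolding G_def .
  qed
  have sb: "0 \<le> Ssum G h k (bsize n A) \<and> 0 \<le> Ssum G h (Suc k) (bsize n B)
     \<and> Ssum G h k (bsize n A) \<le> (1 + real n * (D / h 1 1)) * Ssum G h (Suc k) (bsize n B)"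
    by (rule ssum_bound[OF A B k(1)]) (use hh G_nn D G_mono s in auto)
  have bk1: "0 < real (K choose Suc k)" using k by simp
  have pA: "p_NGG K \<sigma> \<beta> n k A = real (K choose k) * Ssum G h k (bsize n A)"
    unfolding eq using k by simp
  have pB: "p_NGG K \<sigma> \<beta> n (Suc k) B = real (K choose Suc k) * Ssum G h (Suc k) (bsize n B)"
    unfolding eq using k by simp
  have E: "0 \<le> D / h 1 1" using D hh(5) s by simp
  have Mq: "M = real (K choose k) / (real (K choose Suc k)) * (1 + D / h 1 1)"
    unfolding M_def D_def hh(5) ..
  have "p_NGG K \<sigma> \<beta> n k A \<le> M * real n * p_NGG K \<sigma> \<beta> n (Suc k) B"
    unfolding pA pB Mq
    by (rule final_arith) (use sb bk1 E n in auto)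
  then show ?thesis unfolding pA pB using sb by simp
qed

theorem proposition2:
  fixes K k :: nat
  assumes "K \<ge> 2" and "1 \<le> k" and "k < K"
  shows "(\<forall>\<alpha>::real. \<alpha> > 0 \<longrightarrow> limsup (\<lambda>n. c_seq (p_DM K \<alpha>) n k) < \<infinity>)
       \<and> (\<forall>\<sigma> \<alpha>::real. 0 < \<sigma> \<and> \<sigma> < 1 \<and> \<alpha> > - \<sigma> \<longrightarrow> limsup (\<lambda>n. c_seq (p_PY K \<sigma> \<alpha>) n k) < \<infinity>)
       \<and> (\<forall>\<sigma> \<beta>::real. 0 < \<sigma> \<and> \<sigma> < 1 \<and> \<beta> > 0 \<longrightarrow> limsup (\<lambda>n. c_seq (p_NGG K \<sigma> \<beta>) n k) < \<infinity>)"
proof (intro conjI allI impI)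
  have k: "1 \<le> k" "Suc k \<le> K" using assms by auto
  have bk1: "0 < real (K choose Suc k)" using k by simp
  fix \<alpha> :: real assume a: "\<alpha> > 0"
  show "limsup (\<lambda>n. c_seq (p_DM K \<alpha>) n k) < \<infinity>"
  proof (rule limsup_bound[OF k(1)])
    show "0 \<le> real (K choose k) / real (K choose Suc k) * ((\<alpha> / real K + 1) / (\<alpha> / real K))"
      using a bk1 by simp
    fix n A B assume "k < n" "A \<in> ord_parts n k" "B \<in> split_parts n k A"
    then show "0 \<le> p_DM K \<alpha> n k A \<and> 0 \<le> p_DM K \<alpha> n (Suc k) B \<and>
      p_DM K \<alpha> n k A \<le> real (K choose k) / real (K choose Suc k) * ((\<alpha> / real K + 1) / (\<alpha> / real K))
         * real n * p_DM K \<alpha> n (Suc k) B"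
      by (rule DM_bound[OF k a])
  qed
next
  have k: "1 \<le> k" "Suc k \<le> K" using assms by auto
  have bk1: "0 < real (K choose Suc k)" using k by simp
  fix \<sigma> \<alpha> :: real assume p: "0 < \<sigma> \<and> \<sigma> < 1 \<and> \<alpha> > - \<sigma>"
  show "limsup (\<lambda>n. c_seq (p_PY K \<sigma> \<alpha>) n k) < \<infinity>"
  proof (rule limsup_bound[OF k(1)])
    have "\<alpha> / \<sigma> + 1 > 0" using p by (simp add: field_simps)
    then show "0 \<le> real (K choose k) / real (K choose Suc k) * (1 + (1 / (\<alpha> / \<sigma> + 1)) / (\<sigma> / real K))"
      using p bk1 by simp
    fix n A B assume "k < n" "A \<in> ord_parts n k" "B \<in> split_parts n k A"
    then show "0 \<le> p_PY K \<sigma> \<alpha> n k A \<and> 0 \<le> p_PY K \<sigma> \<alpha> n (Suc k) B \<and>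
      p_PY K \<sigma> \<alpha> n k A \<le> real (K choose k) / real (K choose Suc k) * (1 + (1 / (\<alpha> / \<sigma> + 1)) / (\<sigma> / real K))
         * real n * p_PY K \<sigma> \<alpha> n (Suc k) B"
      using PY_bound[OF k] p by blast
  qed
next
  have k: "1 \<le> k" "Suc k \<le> K" using assms by auto
  have bk1: "0 < real (K choose Suc k)" using k by simp
  fix \<sigma> \<beta> :: real assume p: "0 < \<sigma> \<and> \<sigma> < 1 \<and> \<beta> > 0"
  show "limsup (\<lambda>n. c_seq (p_NGG K \<sigma> \<beta>) n k) < \<infinity>"
  proof (rule limsup_bound[OF k(1)])
    show "0 \<le> real (K choose k) / real (K choose Suc k) * (1 + (real K / (\<sigma> * \<beta>)) / (\<sigma> / \<sigma>))"
      using p bk1 by simp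
    fix n A B assume "k < n" "A \<in> ord_parts n k" "B \<in> split_parts n k A"
    then show "0 \<le> p_NGG K \<sigma> \<beta> n k A \<and> 0 \<le> p_NGG K \<sigma> \<beta> n (Suc k) B \<and>
      p_NGG K \<sigma> \<beta> n k A \<le> real (K choose k) / real (K choose Suc k) * (1 + (real K / (\<sigma> * \<beta>)) / (\<sigma> / \<sigma>))
         * real n * p_NGG K \<sigma> \<beta> n (Suc k) B"
      using NGG_bound[OF k] p by blast
  qed
qed


end
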